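(* A c.i.d. sequence $(X_n)_{n\ge1}$ of $\mathbb X$-valued random variables is exchangeable if and only if, for every $n\ge1$ and every permutation $\pi$ of $\{1,\dots,n\}$, $$\mathbb P[X_{n+1}\in\cdot\mid X_1\in A_1,\dots,X_n\in A_n]=\mathbb P[X_{n+1}\in\cdot\mid X_{\pi(1)}\in A_1,\dots,X_{\pi(n)}\in A_n]$$ for all $A_1,\dots,A_n\in\mathcal X$ such that both conditioning events have positive probability.
   Context: $(\Omega,\mathcal F,\mathbb P)$ is a probability space; $\mathbb X$ is Polish with Borel $\sigma$-algebra $\mathcal X$. A sequence $(X_n)$ is c.i.d. if $\mathbb E[f(X_{n+k})\mid X_1,\dots,X_n]=\mathbb E[f(X_{n+1})\mid X_1,\dots,X_n]$ a.s. for all $k\ge1$, $n\ge0$ and bounded measurable $f:\mathbb X\to\mathbb R$ (for $n=0$, conditioning is on the trivial $\sigma$-field). It is exchangeable if its law is invariant under finite permutations of the indices. *)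

theory Defs
  imports "HOL-Probability.Probability" "HOL-Combinatorics.Permutations"
begin

text \<open>Indexing convention: the paper's X_1, X_2, ... are X 0, X 1, ... here.\<close>

definition nat_filt :: "'a measure \<Rightarrow> (nat \<Rightarrow> 'a \<Rightarrow> 'b::topological_space) \<Rightarrow> nat \<Rightarrow> 'a measure" where
  "nat_filt M X n = sigma (space M) {X i -` B \<inter> space M | i B. i < n \<and> B \<in> sets borel}"

text \<open>Conditionally identically distributed sequence. In 0-based indexing the paper's
  X_{n+k} (k >= 1) is X (n + k) with k >= 0 here, and X_{n+1} is X n.\<close>
definition cid :: "'a measure \<Rightarrow> (nat \<Rightarrow> 'a \<Rightarrow> 'b::topological_space) \<Rightarrow> bool" where
  "cid M X \<longleftrightarrow> (\<forall>n k (f::'b \<Rightarrow> real). f \<in> borel_measurable borel \<longrightarrow> bounded (range f) \<longrightarrow>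
      (AE \<omega> in M. real_cond_exp M (nat_filt M X n) (\<lambda>\<omega>. f (X (n + k) \<omega>)) \<omega>
                 = real_cond_exp M (nat_filt M X n) (\<lambda>\<omega>. f (X n \<omega>)) \<omega>))"

definition exchangeable :: "'a measure \<Rightarrow> (nat \<Rightarrow> 'a \<Rightarrow> 'b::topological_space) \<Rightarrow> bool" where
  "exchangeable M X \<longleftrightarrow> (\<forall>\<pi>. \<pi> permutes UNIV \<and> finite {i. \<pi> i \<noteq> i} \<longrightarrow>
      distr M (PiM UNIV (\<lambda>_. borel)) (\<lambda>\<omega> i. X (\<pi> i) \<omega>)
      = distr M (PiM UNIV (\<lambda>_. borel)) (\<lambda>\<omega> i. X i \<omega>))"

end

theory Submission
  imports Defs
begin

lemma ev_Suc_split: "{\<omega>\<in>S. \<forall>i<Suc k. f i \<omega> \<in> A i} = {\<omega>\<in>S. \<forall>i<k. f i \<omega> \<in> A i} \<inter> (f k -` A k \<inter> S)"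
  by (auto simp: less_Suc_eq)

lemma zero_of_bounds:
  fixes d :: real and a b :: "nat \<Rightarrow> real"
  assumes bd: "\<And>N. N \<ge> k \<Longrightarrow> d\<^sup>2 \<le> 2 * a N + 2 * b N"
    and a0: "\<And>N. 0 \<le> a N" and b0: "\<And>N. 0 \<le> b N"
    and as: "\<And>m. (\<Sum>N<m. a N) \<le> 1" and bs: "\<And>m. (\<Sum>N<m. b N) \<le> 1"
  shows "d = 0"
proof (rule ccontr)
  assume "d \<noteq> 0"
  then have dp: "d\<^sup>2 > 0" by simp
  obtain m :: nat where m: "4 / d\<^sup>2 < real m" using reals_Archimedean2 by blast
  have "real m * d\<^sup>2 = (\<Sum>N\<in>{k..<k+m}. d\<^sup>2)" by simp
  also have "\<dots> \<le> (\<Sum>N\<in>{k..<k+m}. 2 * a N + 2 * b N)" by (rule sum_mono) (rule bd, simp)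
  also have "\<dots> \<le> (\<Sum>N\<in>{..<k+m}. 2 * a N + 2 * b N)"
    by (rule sum_mono2) (auto intro!: add_nonneg_nonneg mult_nonneg_nonneg a0 b0)
  also have "\<dots> = 2 * (\<Sum>N<k+m. a N) + 2 * (\<Sum>N<k+m. b N)"
    by (simp add: sum.distrib sum_distrib_left)
  also have "\<dots> \<le> 4" using as[of "k+m"] bs[of "k+m"] by linarith
  finally have "real m * d\<^sup>2 \<le> 4" .
  moreover have "4 < real m * d\<^sup>2" using m dp by (simp add: field_simps)
  ultimately show False by linarith
qed

lemma perm_ext:
  assumes inj: "inj_on j {..<k}" and rng: "j ` {..<k} \<subseteq> {..<n}" and kn: "k \<le> (n::nat)"
  shows "\<exists>\<pi>. \<pi> permutes {..<n} \<and> (\<forall>i<k. \<pi> i = j i)"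
proof -
  define S where "S = {..<n} - {..<k}"
  define T where "T = {..<n} - j ` {..<k}"
  have cS: "card S = n - k" unfolding S_def using kn by (simp add: card_Diff_subset)
  have cT: "card T = n - k" unfolding T_def using rng inj
    by (simp add: card_Diff_subset card_image)
  obtain h where h: "bij_betw h S T"
    using finite_same_card_bij[of S T] cS cT unfolding S_def T_def by auto
  define \<pi> where "\<pi> i = (if i < k then j i else if i < n then h i else i)" for i
  have b1: "bij_betw \<pi> {..<k} (j ` {..<k})"
    using inj_on_imp_bij_betw[OF inj] by (rule bij_betw_cong[THEN iffD1, rotated]) (simp add: \<pi>_def)
  have b2: "bij_betw \<pi> S T"
    using h by (rule bij_betw_cong[THEN iffD1, rotated]) (auto simp: \<pi>_def S_def)
  have "bij_betw \<pi> ({..<k} \<union> S) (j ` {..<k} \<union> T)"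
    by (rule bij_betw_combine[OF b1 b2]) (auto simp: T_def)
  moreover have "{..<k} \<union> S = {..<n}" using kn by (auto simp: S_def)
  moreover have "j ` {..<k} \<union> T = {..<n}" using rng by (auto simp: T_def)
  ultimately have "bij_betw \<pi> {..<n} {..<n}" by simp
  then have "\<pi> permutes {..<n}"
    by (rule bij_imp_permutes) (use kn in \<open>auto simp: \<pi>_def\<close>)
  then show ?thesis by (auto simp: \<pi>_def)
qed

definition sw :: "nat \<Rightarrow> nat \<Rightarrow> nat \<Rightarrow> nat" where
  "sw p k i = (if i = p then k else if i = k then p else i)"

lemma sw_lt: "p < Suc k \<Longrightarrow> i < Suc k \<Longrightarrow> sw p k i < Suc k"
  by (auto simp: sw_def)

lemma sw_sw: "sw p k (sw p k i) = i"
  by (auto simp: sw_def)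

lemma ev_reindex: assumes "p < Suc k" shows "(\<forall>i<Suc k. P i) \<longleftrightarrow> (\<forall>i<Suc k. P (sw p k i))"
proof
  assume a: "\<forall>i<Suc k. P i"
  show "\<forall>i<Suc k. P (sw p k i)" using a sw_lt[OF assms] by blast
next
  assume a: "\<forall>i<Suc k. P (sw p k i)"
  show "\<forall>i<Suc k. P i"
  proof (intro allI impI)
    fix i assume "i < Suc k"
    then have "P (sw p k (sw p k i))" using a sw_lt[OF assms] by blast
    then show "P i" by (simp add: sw_sw)
  qed
qed

lemma ev_jN: assumes "p < k" "k \<le> N"
  shows "(\<forall>i<Suc k. f (if i = p then N else if i = k then Suc N else i) \<in> A i) \<longleftrightarrow>
    ((\<forall>i<k. f i \<in> (if i = p then UNIV else A i)) \<and> f N \<in> A p \<and> f (Suc N) \<in> A k)"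
proof
  assume a: "\<forall>i<Suc k. f (if i = p then N else if i = k then Suc N else i) \<in> A i"
  have 1: "f N \<in> A p" using a[rule_format, of p] assms by simp
  have 2: "f (Suc N) \<in> A k" using a[rule_format, of k] assms by simp
  have 3: "\<forall>i<k. f i \<in> (if i = p then UNIV else A i)"
  proof (intro allI impI)
    fix i assume i: "i < k"
    show "f i \<in> (if i = p then UNIV else A i)"
    proof (cases "i = p")
      case False
      then show ?thesis using a[rule_format, of i] i by simp
    qed simp
  qed
  show "(\<forall>i<k. f i \<in> (if i = p then UNIV else A i)) \<and> f N \<in> A p \<and> f (Suc N) \<in> A k"
    using 1 2 3 by blast
next
  assume a: "(\<forall>i<k. f i \<in> (if i = p then UNIV else A i)) \<and> f N \<in> A p \<and> f (Suc N) \<in> A k"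
  show "\<forall>i<Suc k. f (if i = p then N else if i = k then Suc N else i) \<in> A i"
  proof (intro allI impI)
    fix i assume i: "i < Suc k"
    show "f (if i = p then N else if i = k then Suc N else i) \<in> A i"
    proof (cases "i = p")
      case True then show ?thesis using a by simp
    next
      case False
      show ?thesis
      proof (cases "i = k")
        case True then show ?thesis using a assms by simp
      next
        case False2: False
        then have "i < k" using i by simp
        then show ?thesis using a False False2 by auto
      qed
    qed
  qed
qed

locale cidseq = prob_space M for M :: "'a measure" +
  fixes X :: "nat \<Rightarrow> 'a \<Rightarrow> 'b::polish_space"
  assumes Xm[measurable]: "\<And>i. X i \<in> borel_measurable M"
      and cidX: "cid M X"
begin

abbreviation "F n \<equiv> nat_filt M X n"

lemma gen_sub: "{X i -` B \<inter> space M | i B. i < n \<and> B \<in> sets borel} \<subseteq> Pow (space M)"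
  by auto

lemma space_F[simp]: "space (F n) = space M"
  unfolding nat_filt_def using gen_sub by (simp add: space_measure_of_conv)

lemma sets_F: "sets (F n) = sigma_sets (space M) {X i -` B \<inter> space M | i B. i < n \<and> B \<in> sets borel}"
  unfolding nat_filt_def using gen_sub by (simp add: sets_measure_of_conv)

lemma sets_F_sub: "sets (F n) \<subseteq> sets M"
  unfolding sets_F by (rule sets.sigma_sets_subset) auto

lemma subalg: "subalgebra M (F n)"
  using sets_F_sub by (auto simp: subalgebra_def)

lemma F_mono: "n \<le> m \<Longrightarrow> subalgebra (F m) (F n)"
  unfolding subalgebra_def sets_F by (force intro!: sigma_sets_mono')

lemma sfs: "sigma_finite_subalgebra M (F n)"
  by (rule finite_measure_subalgebra_is_sigma_finite) (simp add: finite_measure_subalgebra_def finite_measure_subalgebra_axioms_def subalg finite_measure_axioms)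

lemma XF: "i < n \<Longrightarrow> X i \<in> borel_measurable (F n)"
  by (rule measurableI) (auto simp: sets_F intro!: sigma_sets.Basic)

lemma evF: "k \<le> n \<Longrightarrow> (\<forall>i<k. A i \<in> sets borel) \<Longrightarrow> {\<omega>\<in>space M. \<forall>i<k. X i \<omega> \<in> A i} \<in> sets (F n)"
proof (induction k)
  case 0
  have "{\<omega>\<in>space M. \<forall>i<(0::nat). X i \<omega> \<in> A i} = space (F n)" unfolding space_F by blast
  then show ?case using sets.top[of "F n"] by (simp only:)
next
  case (Suc k)
  have "{\<omega>\<in>space M. \<forall>i<Suc k. X i \<omega> \<in> A i} = {\<omega>\<in>space M. \<forall>i<k. X i \<omega> \<in> A i} \<inter> (X k -` A k \<inter> space M)"
    by (rule ev_Suc_split)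
  also have "\<dots> \<in> sets (F n)"
  proof (rule sets.Int)
    show "X k -` A k \<inter> space M \<in> sets (F n)"
    proof -
      have kn: "k < n" using Suc.prems(1) by linarith
      have "A k \<in> sets borel" using Suc.prems(2) by blast
      from measurable_sets[OF XF[OF kn] this] show ?thesis by (simp only: space_F)
    qed
    show "{\<omega>\<in>space M. \<forall>i<k. X i \<omega> \<in> A i} \<in> sets (F n)"
      using Suc.IH Suc.prems by (meson Suc_leD less_SucI)
  qed
  finally show ?case .
qed


definition alpha :: "nat \<Rightarrow> 'b set \<Rightarrow> 'a \<Rightarrow> real" where
  "alpha n B = real_cond_exp M (F n) (\<lambda>\<omega>. indicator B (X n \<omega>))"

lemma alpha_measF[measurable]: "alpha n B \<in> borel_measurable (F n)"
  unfolding alpha_def by (rule borel_measurable_cond_exp)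

lemma alpha_meas[measurable]: "alpha n B \<in> borel_measurable M"
  unfolding alpha_def by (rule borel_measurable_cond_exp2)

lemma measF_M: "f \<in> borel_measurable (F n) \<Longrightarrow> f \<in> borel_measurable M"
  by (rule measurable_from_subalg[OF subalg])

lemma ind_meas[measurable]: "B \<in> sets borel \<Longrightarrow> (\<lambda>\<omega>. indicator B (X m \<omega>) :: real) \<in> borel_measurable M"
  by (rule measurable_compose[OF Xm borel_measurable_indicator])

lemma int_bdd: "f \<in> borel_measurable M \<Longrightarrow> AE x in M. \<bar>f x\<bar> \<le> c \<Longrightarrow> integrable M (f :: 'a \<Rightarrow> real)"
  by (rule integrable_const_bound) auto

lemma ind_int: "B \<in> sets borel \<Longrightarrow> integrable M (\<lambda>\<omega>. indicator B (X m \<omega>) :: real)"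
  by (rule int_bdd[where c=1]) (auto simp: indicator_def)

lemma alpha_bd: assumes "B \<in> sets borel" shows "AE \<omega> in M. 0 \<le> alpha n B \<omega> \<and> alpha n B \<omega> \<le> 1"
proof -
  have "AE \<omega> in M. 0 \<le> alpha n B \<omega>" unfolding alpha_def
    by (rule sigma_finite_subalgebra.real_cond_exp_ge_c[OF sfs ind_int[OF assms]]) (auto simp: indicator_def)
  moreover have "AE \<omega> in M. alpha n B \<omega> \<le> 1" unfolding alpha_def
    by (rule sigma_finite_subalgebra.real_cond_exp_le_c[OF sfs ind_int[OF assms]]) (auto simp: indicator_def)
  ultimately show ?thesis by auto
qed

lemma alpha_abs: assumes "B \<in> sets borel" shows "AE \<omega> in M. \<bar>alpha n B \<omega>\<bar> \<le> 1"
  using alpha_bd[OF assms, of n] by eventually_elim auto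

lemma alpha_int: "B \<in> sets borel \<Longrightarrow> integrable M (alpha n B)"
  by (rule int_bdd[OF alpha_meas alpha_abs])

lemma cidI: assumes "B \<in> sets borel" "n \<le> m"
  shows "AE \<omega> in M. real_cond_exp M (F n) (\<lambda>\<omega>. indicator B (X m \<omega>)) \<omega> = alpha n B \<omega>"
proof -
  have bm: "(indicator B :: 'b \<Rightarrow> real) \<in> borel_measurable borel"
    using assms(1) by (rule borel_measurable_indicator)
  have "range (indicator B :: 'b \<Rightarrow> real) \<subseteq> {0,1}" by (auto simp: indicator_def)
  then have bd: "bounded (range (indicator B :: 'b \<Rightarrow> real))"
    by (rule bounded_subset[rotated]) (rule finite_imp_bounded, simp)
  have m: "m = n + (m - n)" using assms(2) by simp
  from cidX bm bd have "AE \<omega> in M. real_cond_exp M (F n) (\<lambda>\<omega>. indicator B (X (n + (m - n)) \<omega>)) \<omega>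
                 = real_cond_exp M (F n) (\<lambda>\<omega>. indicator B (X n \<omega>)) \<omega>"
    unfolding cid_def by blast
  then show ?thesis using m unfolding alpha_def by simp
qed

lemma key1:
  assumes B: "B \<in> sets borel" and "n \<le> m" and fm: "f \<in> borel_measurable (F n)"
    and fb: "AE \<omega> in M. \<bar>f \<omega>\<bar> \<le> c"
  shows "(\<integral>\<omega>. f \<omega> * indicator B (X m \<omega>) \<partial>M) = (\<integral>\<omega>. f \<omega> * alpha n B \<omega> \<partial>M)"
proof -
  have fM: "f \<in> borel_measurable M" by (rule measF_M[OF fm])
  have "integrable M (\<lambda>\<omega>. f \<omega> * indicator B (X m \<omega>))"
  proof (rule int_bdd[where c=c])
    show "(\<lambda>\<omega>. f \<omega> * indicator B (X m \<omega>)) \<in> borel_measurable M"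
      using fM ind_meas[OF B] by (rule borel_measurable_times)
    show "AE x in M. \<bar>f x * indicator B (X m x)\<bar> \<le> c"
      using fb by eventually_elim (auto simp: indicator_def)
  qed
  then have "(\<integral>\<omega>. f \<omega> * real_cond_exp M (F n) (\<lambda>\<omega>. indicator B (X m \<omega>)) \<omega> \<partial>M) = (\<integral>\<omega>. f \<omega> * indicator B (X m \<omega>) \<partial>M)"
    using sigma_finite_subalgebra.real_cond_exp_intg(2)[OF sfs _ fm ind_meas[OF B]] by blast
  moreover have "(\<integral>\<omega>. f \<omega> * real_cond_exp M (F n) (\<lambda>\<omega>. indicator B (X m \<omega>)) \<omega> \<partial>M) = (\<integral>\<omega>. f \<omega> * alpha n B \<omega> \<partial>M)"
    using cidI[OF B assms(2)] by (intro integral_cong_AE) (auto intro!: borel_measurable_times fM)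
  ultimately show ?thesis by simp
qed

lemma mart: assumes B: "B \<in> sets borel"
  shows "AE \<omega> in M. real_cond_exp M (F n) (alpha (Suc n) B) \<omega> = alpha n B \<omega>"
proof -
  have "AE \<omega> in M. real_cond_exp M (F n) (alpha (Suc n) B) \<omega> = real_cond_exp M (F n) (\<lambda>\<omega>. indicator B (X (Suc n) \<omega>)) \<omega>"
    unfolding alpha_def
    by (rule sigma_finite_subalgebra.real_cond_exp_nested_subalg[OF sfs subalg F_mono ind_int[OF B]]) simp
  with cidI[OF B, of n "Suc n"] show ?thesis by auto
qed

lemma orth: assumes B: "B \<in> sets borel"
  shows "(\<integral>\<omega>. alpha n B \<omega> * alpha (Suc n) B \<omega> \<partial>M) = (\<integral>\<omega>. alpha n B \<omega> * alpha n B \<omega> \<partial>M)"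
proof -
  have i: "integrable M (\<lambda>\<omega>. alpha n B \<omega> * alpha (Suc n) B \<omega>)"
  proof (rule int_bdd[where c=1])
    show "AE x in M. \<bar>alpha n B x * alpha (Suc n) B x\<bar> \<le> 1"
      using alpha_bd[OF B, of n] alpha_bd[OF B, of "Suc n"] by eventually_elim (auto simp: abs_mult intro: mult_le_one)
  qed simp
  have "(\<integral>\<omega>. alpha n B \<omega> * real_cond_exp M (F n) (alpha (Suc n) B) \<omega> \<partial>M) = (\<integral>\<omega>. alpha n B \<omega> * alpha (Suc n) B \<omega> \<partial>M)"
    by (rule sigma_finite_subalgebra.real_cond_exp_intg(2)[OF sfs i alpha_measF alpha_meas])
  moreover have "(\<integral>\<omega>. alpha n B \<omega> * real_cond_exp M (F n) (alpha (Suc n) B) \<omega> \<partial>M) = (\<integral>\<omega>. alpha n B \<omega> * alpha n B \<omega> \<partial>M)"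
    using mart[OF B, of n] by (intro integral_cong_AE) auto
  ultimately show ?thesis by simp
qed


lemma aa_int: assumes B: "B \<in> sets borel" and C: "C \<in> sets borel"
  shows "integrable M (\<lambda>\<omega>. alpha n B \<omega> * alpha m C \<omega>)"
proof (rule int_bdd[where c=1])
  show "AE x in M. \<bar>alpha n B x * alpha m C x\<bar> \<le> 1"
    using alpha_bd[OF B, of n] alpha_bd[OF C, of m] by eventually_elim (auto simp: abs_mult intro: mult_le_one)
qed simp

definition Q :: "nat \<Rightarrow> 'b set \<Rightarrow> real" where
  "Q n B = (\<integral>\<omega>. alpha n B \<omega> * alpha n B \<omega> \<partial>M)"

definition Dl :: "nat \<Rightarrow> 'b set \<Rightarrow> real" where
  "Dl n B = (\<integral>\<omega>. (alpha (Suc n) B \<omega> - alpha n B \<omega>)\<^sup>2 \<partial>M)"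

lemma Dl_nonneg: "0 \<le> Dl n B"
  unfolding Dl_def by (rule Bochner_Integration.integral_nonneg) simp

lemma Dl_eq: assumes B: "B \<in> sets borel" shows "Dl n B = Q (Suc n) B - Q n B"
proof -
  note i1 = aa_int[OF B B, of "Suc n" "Suc n"] and i2 = aa_int[OF B B, of n "Suc n"] and i3 = aa_int[OF B B, of n n]
  have "Dl n B = (\<integral>\<omega>. (alpha (Suc n) B \<omega> * alpha (Suc n) B \<omega> - 2 * (alpha n B \<omega> * alpha (Suc n) B \<omega>)) + alpha n B \<omega> * alpha n B \<omega> \<partial>M)"
    unfolding Dl_def by (rule Bochner_Integration.integral_cong) (simp_all add: power2_eq_square algebra_simps)
  also have "\<dots> = (\<integral>\<omega>. alpha (Suc n) B \<omega> * alpha (Suc n) B \<omega> - 2 * (alpha n B \<omega> * alpha (Suc n) B \<omega>) \<partial>M) + Q n B"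
    unfolding Q_def using i1 i2 i3 by (intro Bochner_Integration.integral_add) auto
  also have "(\<integral>\<omega>. alpha (Suc n) B \<omega> * alpha (Suc n) B \<omega> - 2 * (alpha n B \<omega> * alpha (Suc n) B \<omega>) \<partial>M)
      = Q (Suc n) B - (\<integral>\<omega>. 2 * (alpha n B \<omega> * alpha (Suc n) B \<omega>) \<partial>M)"
    unfolding Q_def using i1 i2 by (intro Bochner_Integration.integral_diff) auto
  also have "(\<integral>\<omega>. 2 * (alpha n B \<omega> * alpha (Suc n) B \<omega>) \<partial>M) = 2 * Q n B"
    unfolding Q_def orth[OF B, symmetric] by (rule integral_mult_right_zero)
  finally show ?thesis by simp
qed

lemma Q_le1: assumes B: "B \<in> sets borel" shows "Q n B \<le> 1"
proof -
  have "Q n B \<le> (\<integral>\<omega>. 1 \<partial>M)" unfolding Q_def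
  proof (intro integral_mono_AE aa_int[OF B B])
    show "AE x in M. alpha n B x * alpha n B x \<le> 1"
      using alpha_bd[OF B, of n] by eventually_elim (auto intro: mult_le_one)
  qed simp
  then show ?thesis by (simp add: prob_space)
qed

lemma Q_nonneg: "0 \<le> Q n B"
  unfolding Q_def by (rule Bochner_Integration.integral_nonneg) simp

lemma energy: assumes B: "B \<in> sets borel" shows "(\<Sum>N<m. Dl N B) \<le> 1"
proof -
  have "(\<Sum>N<m. Dl N B) = Q m B - Q 0 B"
    by (induction m) (simp_all add: Dl_eq[OF B])
  then show ?thesis using Q_le1[OF B, of m] Q_nonneg[of 0 B] by linarith
qed

lemma sq_int_le: fixes f :: "'a \<Rightarrow> real" shows "integrable M f \<Longrightarrow> integrable M (\<lambda>x. (f x)\<^sup>2) \<Longrightarrow> (\<integral>x. f x \<partial>M)\<^sup>2 \<le> (\<integral>x. (f x)\<^sup>2 \<partial>M)"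
  using variance_eq[of f] Bochner_Integration.integral_nonneg[of M "\<lambda>x. (f x - expectation f)\<^sup>2"] by simp


lemma sq_aux: "\<bar>h\<bar> \<le> 1 \<Longrightarrow> (h * d)\<^sup>2 \<le> (d::real)\<^sup>2"
  by (simp add: abs_le_square_iff[symmetric] abs_mult mult_left_le_one_le)

lemma side:
  assumes gm: "g \<in> borel_measurable (F N)" and gb: "\<And>\<omega>. \<bar>g \<omega>\<bar> \<le> 1"
    and C: "C \<in> sets borel" and D: "D \<in> sets borel"
  shows "(\<integral>\<omega>. g \<omega> * indicator C (X N \<omega>) * indicator D (X (Suc N) \<omega>) \<partial>M)
       = (\<integral>\<omega>. g \<omega> * alpha N D \<omega> * alpha N C \<omega> \<partial>M)
       + (\<integral>\<omega>. (g \<omega> * indicator C (X N \<omega>)) * (alpha (Suc N) D \<omega> - alpha N D \<omega>) \<partial>M)"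
proof -
  define h where "h \<omega> = g \<omega> * indicator C (X N \<omega>)" for \<omega>
  have gM: "g \<in> borel_measurable M" by (rule measF_M[OF gm])
  have gS: "g \<in> borel_measurable (F (Suc N))" by (rule measurable_from_subalg[OF F_mono gm]) simp
  have XNS: "(\<lambda>\<omega>. indicator C (X N \<omega>) :: real) \<in> borel_measurable (F (Suc N))"
    by (rule measurable_compose[OF XF[of N "Suc N"] borel_measurable_indicator[OF C]]) simp
  have hS: "h \<in> borel_measurable (F (Suc N))" unfolding h_def using gS XNS by (rule borel_measurable_times)
  have hM: "h \<in> borel_measurable M" by (rule measF_M[OF hS])
  have hb: "\<bar>h \<omega>\<bar> \<le> 1" for \<omega> unfolding h_def using gb[of \<omega>] by (auto simp: indicator_def abs_mult)
  have "(\<integral>\<omega>. g \<omega> * indicator C (X N \<omega>) * indicator D (X (Suc N) \<omega>) \<partial>M) = (\<integral>\<omega>. h \<omega> * indicator D (X (Suc N) \<omega>) \<partial>M)"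
    unfolding h_def ..
  also have "\<dots> = (\<integral>\<omega>. h \<omega> * alpha (Suc N) D \<omega> \<partial>M)"
    by (rule key1[OF D order.refl hS, where c=1]) (simp add: hb)
  also have "\<dots> = (\<integral>\<omega>. h \<omega> * alpha N D \<omega> + h \<omega> * (alpha (Suc N) D \<omega> - alpha N D \<omega>) \<partial>M)"
    by (rule Bochner_Integration.integral_cong) (simp_all add: algebra_simps)
  also have "\<dots> = (\<integral>\<omega>. h \<omega> * alpha N D \<omega> \<partial>M) + (\<integral>\<omega>. h \<omega> * (alpha (Suc N) D \<omega> - alpha N D \<omega>) \<partial>M)"
  proof (rule Bochner_Integration.integral_add)
    show "integrable M (\<lambda>\<omega>. h \<omega> * alpha N D \<omega>)"
    proof (rule int_bdd[where c=1])
      show "(\<lambda>\<omega>. h \<omega> * alpha N D \<omega>) \<in> borel_measurable M" using hM alpha_meas by (rule borel_measurable_times)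
      show "AE x in M. \<bar>h x * alpha N D x\<bar> \<le> 1"
        using alpha_abs[OF D, of N] by eventually_elim (auto simp: abs_mult intro: mult_le_one hb)
    qed
    show "integrable M (\<lambda>\<omega>. h \<omega> * (alpha (Suc N) D \<omega> - alpha N D \<omega>))"
    proof (rule int_bdd[where c=2])
      show "(\<lambda>\<omega>. h \<omega> * (alpha (Suc N) D \<omega> - alpha N D \<omega>)) \<in> borel_measurable M"
        using hM alpha_meas alpha_meas by (intro borel_measurable_times borel_measurable_diff)
      show "AE x in M. \<bar>h x * (alpha (Suc N) D x - alpha N D x)\<bar> \<le> 2"
        using alpha_abs[OF D, of N] alpha_abs[OF D, of "Suc N"]
      proof eventually_elim
        case (elim x)
        have "\<bar>h x * (alpha (Suc N) D x - alpha N D x)\<bar> = \<bar>h x\<bar> * \<bar>alpha (Suc N) D x - alpha N D x\<bar>" by (simp add: abs_mult)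
        also have "\<dots> \<le> 1 * 2" using elim hb[of x] by (intro mult_mono) auto
        finally show ?case by simp
      qed
    qed
  qed
  also have "(\<integral>\<omega>. h \<omega> * alpha N D \<omega> \<partial>M) = (\<integral>\<omega>. (g \<omega> * alpha N D \<omega>) * indicator C (X N \<omega>) \<partial>M)"
    unfolding h_def by (rule Bochner_Integration.integral_cong) (simp_all add: algebra_simps)
  also have "\<dots> = (\<integral>\<omega>. (g \<omega> * alpha N D \<omega>) * alpha N C \<omega> \<partial>M)"
  proof (rule key1[OF C order.refl _, where c=1])
    show "(\<lambda>\<omega>. g \<omega> * alpha N D \<omega>) \<in> borel_measurable (F N)" using gm alpha_measF by (rule borel_measurable_times)
    show "AE \<omega> in M. \<bar>g \<omega> * alpha N D \<omega>\<bar> \<le> 1"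
      using alpha_abs[OF D, of N] by eventually_elim (auto simp: abs_mult intro: mult_le_one gb)
  qed
  finally show ?thesis unfolding h_def by simp
qed

lemma Rbound:
  assumes gm: "g \<in> borel_measurable (F N)" and gb: "\<And>\<omega>. \<bar>g \<omega>\<bar> \<le> 1"
    and C: "C \<in> sets borel" and D: "D \<in> sets borel"
  shows "(\<integral>\<omega>. (g \<omega> * indicator C (X N \<omega>)) * (alpha (Suc N) D \<omega> - alpha N D \<omega>) \<partial>M)\<^sup>2 \<le> Dl N D"
proof -
  define h where "h \<omega> = g \<omega> * indicator C (X N \<omega>)" for \<omega>
  have hM: "h \<in> borel_measurable M" unfolding h_def
    using measF_M[OF gm] ind_meas[OF C] by (rule borel_measurable_times)
  have hb: "\<bar>h \<omega>\<bar> \<le> 1" for \<omega> unfolding h_def using gb[of \<omega>] by (auto simp: indicator_def abs_mult)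
  have dM: "(\<lambda>\<omega>. alpha (Suc N) D \<omega> - alpha N D \<omega>) \<in> borel_measurable M"
    using alpha_meas alpha_meas by (rule borel_measurable_diff)
  have db: "AE x in M. \<bar>alpha (Suc N) D x - alpha N D x\<bar> \<le> 2"
    using alpha_abs[OF D, of N] alpha_abs[OF D, of "Suc N"] by eventually_elim auto
  have sqb: "\<bar>y\<bar> \<le> 2 \<Longrightarrow> \<bar>y\<^sup>2\<bar> \<le> 4" for y :: real
  proof -
    assume a: "\<bar>y\<bar> \<le> 2"
    have "\<bar>y\<bar> * \<bar>y\<bar> \<le> 2 * 2" using a by (intro mult_mono) auto
    then show ?thesis by (simp add: power2_eq_square abs_mult)
  qed
  have hd: "\<bar>d\<bar> \<le> 2 \<Longrightarrow> \<bar>h x * d\<bar> \<le> 2" for x and d :: real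
  proof -
    assume a: "\<bar>d\<bar> \<le> 2"
    have "\<bar>h x\<bar> * \<bar>d\<bar> \<le> 1 * 2" using a hb[of x] by (intro mult_mono) auto
    then show ?thesis by (simp add: abs_mult)
  qed
  have i1: "integrable M (\<lambda>\<omega>. h \<omega> * (alpha (Suc N) D \<omega> - alpha N D \<omega>))"
  proof (rule int_bdd[where c=2])
    show "(\<lambda>\<omega>. h \<omega> * (alpha (Suc N) D \<omega> - alpha N D \<omega>)) \<in> borel_measurable M"
      using hM dM by (rule borel_measurable_times)
    show "AE x in M. \<bar>h x * (alpha (Suc N) D x - alpha N D x)\<bar> \<le> 2"
      using db by eventually_elim (rule hd)
  qed
  have i2: "integrable M (\<lambda>\<omega>. (h \<omega> * (alpha (Suc N) D \<omega> - alpha N D \<omega>))\<^sup>2)"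
  proof (rule int_bdd[where c=4])
    show "(\<lambda>\<omega>. (h \<omega> * (alpha (Suc N) D \<omega> - alpha N D \<omega>))\<^sup>2) \<in> borel_measurable M"
      using hM dM by measurable
    show "AE x in M. \<bar>(h x * (alpha (Suc N) D x - alpha N D x))\<^sup>2\<bar> \<le> 4"
      using db by eventually_elim (rule sqb, rule hd)
  qed
  have i3: "integrable M (\<lambda>\<omega>. (alpha (Suc N) D \<omega> - alpha N D \<omega>)\<^sup>2)"
  proof (rule int_bdd[where c=4])
    show "(\<lambda>\<omega>. (alpha (Suc N) D \<omega> - alpha N D \<omega>)\<^sup>2) \<in> borel_measurable M"
      using dM by measurable
    show "AE x in M. \<bar>(alpha (Suc N) D x - alpha N D x)\<^sup>2\<bar> \<le> 4"
      using db by eventually_elim (rule sqb)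
  qed
  have "(\<integral>\<omega>. h \<omega> * (alpha (Suc N) D \<omega> - alpha N D \<omega>) \<partial>M)\<^sup>2 \<le> (\<integral>\<omega>. (h \<omega> * (alpha (Suc N) D \<omega> - alpha N D \<omega>))\<^sup>2 \<partial>M)"
    by (rule sq_int_le[OF i1 i2])
  also have "\<dots> \<le> Dl N D" unfolding Dl_def
    by (rule integral_mono[OF i2 i3]) (rule sq_aux[OF hb])
  finally show ?thesis unfolding h_def .
qed


lemma swap_zero:
  fixes g :: "'a \<Rightarrow> real"
  assumes gm: "g \<in> borel_measurable (F k)" and gb: "\<And>\<omega>. \<bar>g \<omega>\<bar> \<le> 1"
    and C: "C \<in> sets borel" and D: "D \<in> sets borel"
    and e1: "\<And>N. N \<ge> k \<Longrightarrow> (\<integral>\<omega>. g \<omega> * indicator C (X N \<omega>) * indicator D (X (Suc N) \<omega>) \<partial>M) = c1"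
    and e2: "\<And>N. N \<ge> k \<Longrightarrow> (\<integral>\<omega>. g \<omega> * indicator D (X N \<omega>) * indicator C (X (Suc N) \<omega>) \<partial>M) = c2"
  shows "c1 = c2"
proof -
  have "c1 - c2 = 0"
  proof (rule zero_of_bounds[where k=k and a="\<lambda>N. Dl N D" and b="\<lambda>N. Dl N C"])
    fix N assume N: "k \<le> N"
    have gN: "g \<in> borel_measurable (F N)" by (rule measurable_from_subalg[OF F_mono[OF N] gm])
    define R1 where "R1 = (\<integral>\<omega>. (g \<omega> * indicator C (X N \<omega>)) * (alpha (Suc N) D \<omega> - alpha N D \<omega>) \<partial>M)"
    define R2 where "R2 = (\<integral>\<omega>. (g \<omega> * indicator D (X N \<omega>)) * (alpha (Suc N) C \<omega> - alpha N C \<omega>) \<partial>M)"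
    have s1: "c1 = (\<integral>\<omega>. g \<omega> * alpha N D \<omega> * alpha N C \<omega> \<partial>M) + R1"
      unfolding R1_def e1[OF N, symmetric] by (rule side[OF gN gb C D])
    have s2: "c2 = (\<integral>\<omega>. g \<omega> * alpha N C \<omega> * alpha N D \<omega> \<partial>M) + R2"
      unfolding R2_def e2[OF N, symmetric] by (rule side[OF gN gb D C])
    have t: "(\<integral>\<omega>. g \<omega> * alpha N C \<omega> * alpha N D \<omega> \<partial>M) = (\<integral>\<omega>. g \<omega> * alpha N D \<omega> * alpha N C \<omega> \<partial>M)"
      by (rule Bochner_Integration.integral_cong) (simp_all add: ac_simps)
    have r1: "R1\<^sup>2 \<le> Dl N D" unfolding R1_def by (rule Rbound[OF gN gb C D])
    have r2: "R2\<^sup>2 \<le> Dl N C" unfolding R2_def by (rule Rbound[OF gN gb D C])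
    have "(c1 - c2)\<^sup>2 = (R1 - R2)\<^sup>2" using s1 s2 t by simp
    also have "\<dots> \<le> 2 * R1\<^sup>2 + 2 * R2\<^sup>2"
      using zero_le_power2[of "R1 + R2"] by (simp add: power2_eq_square algebra_simps)
    finally show "(c1 - c2)\<^sup>2 \<le> 2 * Dl N D + 2 * Dl N C" using r1 r2 by linarith
  qed (auto intro: Dl_nonneg energy C D)
  then show ?thesis by simp
qed

lemma meas_ind: assumes E: "E \<in> sets M"
  shows "measure M ({\<omega>\<in>space M. X m \<omega> \<in> B} \<inter> E) = (\<integral>\<omega>. indicator E \<omega> * indicator B (X m \<omega>) \<partial>M)"
proof -
  have sub: "E \<subseteq> space M" using sets.sets_into_space[OF E] .
  have "(\<lambda>\<omega>. indicator E \<omega> * indicator B (X m \<omega>) :: real) = indicator ({\<omega>\<in>space M. X m \<omega> \<in> B} \<inter> E)"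
    using sub by (intro ext) (auto simp: indicator_def)
  then show ?thesis using sub by (simp add: Int_absorb2 Int_assoc)
qed

lemma marg: assumes B: "B \<in> sets borel"
  shows "measure M {\<omega>\<in>space M. X m \<omega> \<in> B} = measure M {\<omega>\<in>space M. X 0 \<omega> \<in> B}"
proof -
  have one: "(\<lambda>\<omega>. 1::real) \<in> borel_measurable (F 0)" by simp
  have "measure M {\<omega>\<in>space M. X m \<omega> \<in> B} = (\<integral>\<omega>. indicator (space M) \<omega> * indicator B (X m \<omega>) \<partial>M)"
    using meas_ind[OF sets.top, of m B] by (simp add: Int_absorb2)
  also have "\<dots> = (\<integral>\<omega>. 1 * indicator B (X m \<omega>) \<partial>M)"
    by (rule Bochner_Integration.integral_cong) auto
  also have "\<dots> = (\<integral>\<omega>. 1 * alpha 0 B \<omega> \<partial>M)" by (rule key1[OF B _ one, where c=1]) auto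
  also have "\<dots> = (\<integral>\<omega>. 1 * indicator B (X 0 \<omega>) \<partial>M)" by (rule key1[OF B _ one, where c=1, symmetric]) auto
  also have "\<dots> = (\<integral>\<omega>. indicator (space M) \<omega> * indicator B (X 0 \<omega>) \<partial>M)"
    by (rule Bochner_Integration.integral_cong) auto
  also have "\<dots> = measure M {\<omega>\<in>space M. X 0 \<omega> \<in> B}"
    using meas_ind[OF sets.top, of 0 B] by (simp add: Int_absorb2)
  finally show ?thesis .
qed


lemma meas3: assumes G: "G \<in> sets M"
  shows "measure M {\<omega>\<in>space M. \<omega> \<in> G \<and> X a \<omega> \<in> C \<and> X b \<omega> \<in> D}
     = (\<integral>\<omega>. indicator G \<omega> * indicator C (X a \<omega>) * indicator D (X b \<omega>) \<partial>M)"
proof -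
  have sub: "G \<subseteq> space M" using sets.sets_into_space[OF G] .
  have "(\<lambda>\<omega>. indicator G \<omega> * indicator C (X a \<omega>) * indicator D (X b \<omega>) :: real) = indicator {\<omega>\<in>space M. \<omega> \<in> G \<and> X a \<omega> \<in> C \<and> X b \<omega> \<in> D}"
    using sub by (intro ext) (auto simp: indicator_def)
  moreover have "{\<omega>\<in>space M. \<omega> \<in> G \<and> X a \<omega> \<in> C \<and> X b \<omega> \<in> D} \<inter> space M = {\<omega>\<in>space M. \<omega> \<in> G \<and> X a \<omega> \<in> C \<and> X b \<omega> \<in> D}" by blast
  ultimately show ?thesis by simp
qed

lemma evM: "(\<forall>i<(k::nat). A i \<in> sets borel) \<Longrightarrow> {\<omega>\<in>space M. \<forall>i<k. X (j i) \<omega> \<in> A i} \<in> sets M"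
proof (induction k)
  case 0
  have "{\<omega>\<in>space M. \<forall>i<(0::nat). X (j i) \<omega> \<in> A i} = space M" by blast
  then show ?case using sets.top[of M] by (simp only:)
next
  case (Suc k)
  have "{\<omega>\<in>space M. \<forall>i<Suc k. X (j i) \<omega> \<in> A i} = {\<omega>\<in>space M. \<forall>i<k. X (j i) \<omega> \<in> A i} \<inter> (X (j k) -` A k \<inter> space M)"
    by (rule ev_Suc_split)
  also have "\<dots> \<in> sets M"
  proof (rule sets.Int)
    have "A k \<in> sets borel" using Suc.prems by blast
    from measurable_sets[OF Xm this] show "X (j k) -` A k \<inter> space M \<in> sets M" .
    show "{\<omega>\<in>space M. \<forall>i<k. X (j i) \<omega> \<in> A i} \<in> sets M"
      using Suc.IH Suc.prems by (meson less_SucI)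
  qed
  finally show ?case .
qed

definition QQ :: "nat \<Rightarrow> bool" where
  "QQ k \<longleftrightarrow> (\<forall>j (A::nat \<Rightarrow> 'b set). inj_on j {..<k} \<longrightarrow> (\<forall>i<k. A i \<in> sets borel) \<longrightarrow>
     measure M {\<omega>\<in>space M. \<forall>i<k. X (j i) \<omega> \<in> A i} = measure M {\<omega>\<in>space M. \<forall>i<k. X i \<omega> \<in> A i})"

definition Hyp :: bool where
  "Hyp \<longleftrightarrow> (\<forall>n \<ge> 1. \<forall>\<pi>. \<pi> permutes {..<n} \<longrightarrow>
      (\<forall>A::nat \<Rightarrow> 'b set. (\<forall>i<n. A i \<in> sets borel) \<longrightarrow>
        (let E1 = {\<omega> \<in> space M. \<forall>i<n. X i \<omega> \<in> A i};
             E2 = {\<omega> \<in> space M. \<forall>i<n. X (\<pi> i) \<omega> \<in> A i}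
         in measure M E1 > 0 \<longrightarrow> measure M E2 > 0 \<longrightarrow>
            (\<forall>B \<in> sets borel.
               measure M ({\<omega> \<in> space M. X n \<omega> \<in> B} \<inter> E1) / measure M E1
             = measure M ({\<omega> \<in> space M. X n \<omega> \<in> B} \<inter> E2) / measure M E2))))"

lemma lastmax:
  assumes H: Hyp and IH: "QQ k" and inj: "inj_on j {..<Suc k}" and lt: "\<forall>i<k. j i < j k"
    and A: "\<forall>i<Suc k. A i \<in> sets borel"
  shows "measure M {\<omega>\<in>space M. \<forall>i<Suc k. X (j i) \<omega> \<in> A i} = measure M {\<omega>\<in>space M. \<forall>i<Suc k. X i \<omega> \<in> A i}"
proof (cases "k = 0")
  case True
  have A0: "A 0 \<in> sets borel" using A by blast
  have "{\<omega>\<in>space M. \<forall>i<Suc k. X (j i) \<omega> \<in> A i} = {\<omega>\<in>space M. X (j 0) \<omega> \<in> A 0}"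
    "{\<omega>\<in>space M. \<forall>i<Suc k. X i \<omega> \<in> A i} = {\<omega>\<in>space M. X 0 \<omega> \<in> A 0}"
    using True by auto
  then show ?thesis using marg[OF A0, of "j 0"] by simp
next
  case False
  define n where "n = j k"
  have injk: "inj_on j {..<k}" using inj by (rule inj_on_subset) auto
  have rng: "j ` {..<k} \<subseteq> {..<n}" using lt by (auto simp: n_def)
  have kn: "k \<le> n" using card_inj_on_le[OF injk rng] by simp
  have n1: "n \<ge> 1" using kn False by simp
  obtain \<pi> where \<pi>: "\<pi> permutes {..<n}" "\<forall>i<k. \<pi> i = j i" using perm_ext[OF injk rng kn] by blast
  define A' where "A' i = (if i < k then A i else UNIV)" for i
  have A': "\<forall>i<n. A' i \<in> sets borel" using A by (auto simp: A'_def)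
  define E1 where "E1 = {\<omega> \<in> space M. \<forall>i<n. X i \<omega> \<in> A' i}"
  define E2 where "E2 = {\<omega> \<in> space M. \<forall>i<n. X (\<pi> i) \<omega> \<in> A' i}"
  have E1: "E1 = {\<omega>\<in>space M. \<forall>i<k. X i \<omega> \<in> A i}" unfolding E1_def A'_def using kn by auto
  have E2: "E2 = {\<omega>\<in>space M. \<forall>i<k. X (j i) \<omega> \<in> A i}" unfolding E2_def A'_def using kn \<pi>(2) by auto
  have Ak: "A k \<in> sets borel" using A by blast
  have Ai: "\<forall>i<k. A i \<in> sets borel" using A by auto
  have eqm: "measure M E2 = measure M E1" unfolding E1 E2 using IH injk Ai unfolding QQ_def by blast
  have hyp: "measure M E1 > 0 \<longrightarrow> measure M E2 > 0 \<longrightarrow>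
            (\<forall>B \<in> sets borel.
               measure M ({\<omega> \<in> space M. X n \<omega> \<in> B} \<inter> E1) / measure M E1
             = measure M ({\<omega> \<in> space M. X n \<omega> \<in> B} \<inter> E2) / measure M E2)"
    using H[unfolded Hyp_def, rule_format, OF n1 \<pi>(1) A'[rule_format]] unfolding E1_def E2_def Let_def .
  have E1s: "E1 \<in> sets (F k)" unfolding E1 using evF[OF order.refl Ai] .
  have E1M: "E1 \<in> sets M" using E1s sets_F_sub by blast
  have E2M: "E2 \<in> sets M" unfolding E2 by (rule evM[OF Ai])
  have num: "measure M ({\<omega> \<in> space M. X n \<omega> \<in> A k} \<inter> E2) = measure M ({\<omega> \<in> space M. X n \<omega> \<in> A k} \<inter> E1)"
  proof (cases "measure M E1 > 0")
    case True
    then show ?thesis using hyp eqm Ak by auto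
  next
    case False
    then have z: "measure M E1 = 0" using measure_nonneg[of M E1] by linarith
    have "measure M ({\<omega> \<in> space M. X n \<omega> \<in> A k} \<inter> E2) \<le> measure M E2"
      by (rule finite_measure_mono) (auto intro: E2M)
    moreover have "measure M ({\<omega> \<in> space M. X n \<omega> \<in> A k} \<inter> E1) \<le> measure M E1"
      by (rule finite_measure_mono) (auto intro: E1M)
    ultimately show ?thesis using z eqm measure_nonneg[of M "{\<omega> \<in> space M. X n \<omega> \<in> A k} \<inter> E2"]
      measure_nonneg[of M "{\<omega> \<in> space M. X n \<omega> \<in> A k} \<inter> E1"] by linarith
  qed
  have L: "{\<omega>\<in>space M. \<forall>i<Suc k. X (j i) \<omega> \<in> A i} = {\<omega> \<in> space M. X n \<omega> \<in> A k} \<inter> E2"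
    unfolding E2 ev_Suc_split n_def by blast
  have R: "{\<omega>\<in>space M. \<forall>i<Suc k. X i \<omega> \<in> A i} = {\<omega> \<in> space M. X k \<omega> \<in> A k} \<inter> E1"
    unfolding E1 ev_Suc_split by blast
  have iE: "indicator E1 \<in> borel_measurable (F k)" using E1s by (rule borel_measurable_indicator)
  have "measure M ({\<omega> \<in> space M. X n \<omega> \<in> A k} \<inter> E1) = (\<integral>\<omega>. indicator E1 \<omega> * indicator (A k) (X n \<omega>) \<partial>M)"
    by (rule meas_ind[OF E1M])
  also have "\<dots> = (\<integral>\<omega>. indicator E1 \<omega> * alpha k (A k) \<omega> \<partial>M)"
    by (rule key1[OF Ak kn iE, where c=1]) (auto simp: indicator_def)
  also have "\<dots> = (\<integral>\<omega>. indicator E1 \<omega> * indicator (A k) (X k \<omega>) \<partial>M)"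
    by (rule key1[OF Ak order.refl iE, where c=1, symmetric]) (auto simp: indicator_def)
  also have "\<dots> = measure M ({\<omega> \<in> space M. X k \<omega> \<in> A k} \<inter> E1)"
    by (rule meas_ind[OF E1M, symmetric])
  finally show ?thesis unfolding L R num .
qed


lemma swapL:
  assumes H: Hyp and IH: "QQ k" and p: "p < k" and A: "\<forall>i<Suc k. A i \<in> sets borel"
  shows "measure M {\<omega>\<in>space M. \<forall>i<Suc k. X i \<omega> \<in> A i} = measure M {\<omega>\<in>space M. \<forall>i<Suc k. X i \<omega> \<in> A (sw p k i)}"
proof -
  define A2 where "A2 i = A (sw p k i)" for i
  have A2: "\<forall>i<Suc k. A2 i \<in> sets borel"
  proof (intro allI impI)
    fix i assume "i < Suc k"
    then have "sw p k i < Suc k" using sw_lt[of p k i] p by simp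
    then show "A2 i \<in> sets borel" unfolding A2_def using A by blast
  qed
  define Gs where "Gs = {\<omega>\<in>space M. \<forall>i<k. X i \<omega> \<in> (if i = p then UNIV else A i)}"
  have GF: "Gs \<in> sets (F k)" unfolding Gs_def
  proof (rule evF[OF order.refl], intro allI impI)
    fix i assume i: "i < k"
    show "(if i = p then UNIV else A i) \<in> sets borel"
    proof (cases "i = p")
      case True then show ?thesis using sets.top[of borel] by simp
    next
      case False then show ?thesis using A i by simp
    qed
  qed
  have GM: "Gs \<in> sets M" using GF sets_F_sub by blast
  have gm: "indicator Gs \<in> borel_measurable (F k)" using GF by (rule borel_measurable_indicator)
  have gb: "\<bar>indicator Gs \<omega> :: real\<bar> \<le> 1" for \<omega> by (simp add: indicator_def)
  have Ap: "A p \<in> sets borel" using A p by simp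
  have Ak: "A k \<in> sets borel" using A by simp
  define c1 where "c1 = measure M {\<omega>\<in>space M. \<forall>i<Suc k. X i \<omega> \<in> A i}"
  define c2 where "c2 = measure M {\<omega>\<in>space M. \<forall>i<Suc k. X i \<omega> \<in> A2 i}"
  have "c1 = c2"
  proof (rule swap_zero[OF gm gb Ap Ak])
    fix N assume N: "k \<le> N"
    define jN where "jN i = (if i = p then N else if i = k then Suc N else i)" for i
    have inj: "inj_on jN {..<Suc k}" unfolding inj_on_def jN_def using p N by auto
    have lt: "\<forall>i<k. jN i < jN k" unfolding jN_def using p N by auto
    have e1: "{\<omega>\<in>space M. \<forall>i<Suc k. X (jN i) \<omega> \<in> A i} = {\<omega>\<in>space M. \<omega> \<in> Gs \<and> X N \<omega> \<in> A p \<and> X (Suc N) \<omega> \<in> A k}"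
    proof (rule set_eqI)
      fix \<omega> show "\<omega> \<in> {\<omega>\<in>space M. \<forall>i<Suc k. X (jN i) \<omega> \<in> A i} \<longleftrightarrow> \<omega> \<in> {\<omega>\<in>space M. \<omega> \<in> Gs \<and> X N \<omega> \<in> A p \<and> X (Suc N) \<omega> \<in> A k}"
        using ev_jN[OF p N, of "\<lambda>i. X i \<omega>" A] unfolding jN_def Gs_def by simp
    qed
    have g2: "(\<forall>i<k. X i \<omega> \<in> (if i = p then UNIV else A2 i)) \<longleftrightarrow> (\<forall>i<k. X i \<omega> \<in> (if i = p then UNIV else A i))" for \<omega>
      unfolding A2_def sw_def by auto
    have A2p: "A2 p = A k" and A2k: "A2 k = A p" unfolding A2_def sw_def by auto
    have e2: "{\<omega>\<in>space M. \<forall>i<Suc k. X (jN i) \<omega> \<in> A2 i} = {\<omega>\<in>space M. \<omega> \<in> Gs \<and> X N \<omega> \<in> A k \<and> X (Suc N) \<omega> \<in> A p}"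
    proof (rule set_eqI)
      fix \<omega> show "\<omega> \<in> {\<omega>\<in>space M. \<forall>i<Suc k. X (jN i) \<omega> \<in> A2 i} \<longleftrightarrow> \<omega> \<in> {\<omega>\<in>space M. \<omega> \<in> Gs \<and> X N \<omega> \<in> A k \<and> X (Suc N) \<omega> \<in> A p}"
        using ev_jN[OF p N, of "\<lambda>i. X i \<omega>" A2] g2[of \<omega>] unfolding jN_def Gs_def A2p A2k by simp
    qed
    have "c1 = measure M {\<omega>\<in>space M. \<forall>i<Suc k. X (jN i) \<omega> \<in> A i}"
      unfolding c1_def by (rule lastmax[OF H IH inj lt A, symmetric])
    also have "\<dots> = (\<integral>\<omega>. indicator Gs \<omega> * indicator (A p) (X N \<omega>) * indicator (A k) (X (Suc N) \<omega>) \<partial>M)"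
      unfolding e1 by (rule meas3[OF GM])
    finally show "(\<integral>\<omega>. indicator Gs \<omega> * indicator (A p) (X N \<omega>) * indicator (A k) (X (Suc N) \<omega>) \<partial>M) = c1" by simp
    have "c2 = measure M {\<omega>\<in>space M. \<forall>i<Suc k. X (jN i) \<omega> \<in> A2 i}"
      unfolding c2_def by (rule lastmax[OF H IH inj lt A2, symmetric])
    also have "\<dots> = (\<integral>\<omega>. indicator Gs \<omega> * indicator (A k) (X N \<omega>) * indicator (A p) (X (Suc N) \<omega>) \<partial>M)"
      unfolding e2 by (rule meas3[OF GM])
    finally show "(\<integral>\<omega>. indicator Gs \<omega> * indicator (A k) (X N \<omega>) * indicator (A p) (X (Suc N) \<omega>) \<partial>M) = c2" by simp
  qed
  then show ?thesis unfolding c1_def c2_def A2_def .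
qed

lemma stepQ: assumes H: Hyp and IH: "QQ k" shows "QQ (Suc k)"
  unfolding QQ_def
proof (intro allI impI)
  fix j :: "nat \<Rightarrow> nat" and A :: "nat \<Rightarrow> 'b set"
  assume inj: "inj_on j {..<Suc k}" and A: "\<forall>i<Suc k. A i \<in> sets borel"
  have fin: "finite (j ` {..<Suc k})" by simp
  have ne: "j ` {..<Suc k} \<noteq> {}"
  proof -
    have "j 0 \<in> j ` {..<Suc k}" by simp
    then show ?thesis by blast
  qed
  have "Max (j ` {..<Suc k}) \<in> j ` {..<Suc k}" by (rule Max_in[OF fin ne])
  then obtain p where p0: "p \<in> {..<Suc k}" and p2: "Max (j ` {..<Suc k}) = j p" by (rule imageE)
  have p1: "p < Suc k" using p0 by simp
  have le: "j i \<le> j p" if "i < Suc k" for i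
  proof -
    have "j i \<in> j ` {..<Suc k}" using that by simp
    from Max_ge[OF fin this] show ?thesis using p2 by simp
  qed
  have lt: "j i < j p" if "i < Suc k" "i \<noteq> p" for i
  proof -
    have "j i \<noteq> j p" using inj_on_eq_iff[OF inj, of i p] that p1 by simp
    then show ?thesis using le[OF that(1)] by simp
  qed
  show "measure M {\<omega>\<in>space M. \<forall>i<Suc k. X (j i) \<omega> \<in> A i} = measure M {\<omega>\<in>space M. \<forall>i<Suc k. X i \<omega> \<in> A i}"
  proof (cases "p = k")
    case True
    have ltk: "\<forall>i<k. j i < j k"
    proof (intro allI impI)
      fix i assume "i < k"
      then show "j i < j k" using lt[of i] True by simp
    qed
    show ?thesis by (rule lastmax[OF H IH inj ltk A])
  next
    case False
    then have pk: "p < k" using p1 by simp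
    define j2 where "j2 i = j (sw p k i)" for i
    define A2 where "A2 i = A (sw p k i)" for i
    have inj2: "inj_on j2 {..<Suc k}"
    proof (rule inj_onI)
      fix x y assume x: "x \<in> {..<Suc k}" and y: "y \<in> {..<Suc k}" and e: "j2 x = j2 y"
      have sx: "sw p k x < Suc k" using sw_lt[OF p1, of x] x by simp
      have sy: "sw p k y < Suc k" using sw_lt[OF p1, of y] y by simp
      have "sw p k x = sw p k y" using inj_on_eq_iff[OF inj, of "sw p k x" "sw p k y"] e sx sy unfolding j2_def by simp
      then have "sw p k (sw p k x) = sw p k (sw p k y)" by simp
      then show "x = y" by (simp add: sw_sw)
    qed
    have lt2: "\<forall>i<k. j2 i < j2 k"
    proof (intro allI impI)
      fix i assume i: "i < k"
      have a: "sw p k i \<noteq> p" using i pk by (auto simp: sw_def)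
      have b: "sw p k i < Suc k" using i pk by (auto simp: sw_def)
      have c: "sw p k k = p" by (simp add: sw_def)
      show "j2 i < j2 k" unfolding j2_def c using lt[OF b a] .
    qed
    have A2: "\<forall>i<Suc k. A2 i \<in> sets borel"
    proof (intro allI impI)
      fix i assume "i < Suc k"
      then have "sw p k i < Suc k" using sw_lt[OF p1, of i] by simp
      then show "A2 i \<in> sets borel" unfolding A2_def using A by blast
    qed
    have eq: "{\<omega>\<in>space M. \<forall>i<Suc k. X (j i) \<omega> \<in> A i} = {\<omega>\<in>space M. \<forall>i<Suc k. X (j2 i) \<omega> \<in> A2 i}"
    proof (rule set_eqI)
      fix \<omega>
      have "(\<forall>i<Suc k. X (j i) \<omega> \<in> A i) \<longleftrightarrow> (\<forall>i<Suc k. X (j2 i) \<omega> \<in> A2 i)"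
        unfolding j2_def A2_def by (rule ev_reindex[OF p1])
      then show "\<omega> \<in> {\<omega>\<in>space M. \<forall>i<Suc k. X (j i) \<omega> \<in> A i} \<longleftrightarrow> \<omega> \<in> {\<omega>\<in>space M. \<forall>i<Suc k. X (j2 i) \<omega> \<in> A2 i}"
        by simp
    qed
    have "measure M {\<omega>\<in>space M. \<forall>i<Suc k. X (j i) \<omega> \<in> A i} = measure M {\<omega>\<in>space M. \<forall>i<Suc k. X i \<omega> \<in> A2 i}"
      unfolding eq by (rule lastmax[OF H IH inj2 lt2 A2])
    also have "\<dots> = measure M {\<omega>\<in>space M. \<forall>i<Suc k. X i \<omega> \<in> A i}"
      unfolding A2_def by (rule swapL[OF H IH pk A, symmetric])
    finally show ?thesis .
  qed
qed

lemma allQ: assumes H: Hyp shows "QQ k"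
proof (induction k)
  case 0 show ?case unfolding QQ_def by simp
next
  case (Suc k) then show ?case by (rule stepQ[OF H])
qed


lemma fmeas: "(\<lambda>\<omega> i. X (\<pi> i) \<omega>) \<in> measurable M (PiM UNIV (\<lambda>_. borel))"
  by (rule measurable_PiM_single'[where f="\<lambda>i \<omega>. X (\<pi> i) \<omega>"]) (auto simp: space_PiM)

lemma cyl:
  assumes J: "finite J" and A: "\<forall>i\<in>J. A i \<in> sets borel"
  shows "emeasure (distr M (PiM UNIV (\<lambda>_. borel)) (\<lambda>\<omega> i. X (\<pi> i) \<omega>)) (prod_emb UNIV (\<lambda>_. borel) J (PiE J A))
     = emeasure M {\<omega>\<in>space M. \<forall>i\<in>J. X (\<pi> i) \<omega> \<in> A i}"
proof -
  have S: "prod_emb UNIV (\<lambda>_. borel) J (PiE J A) \<in> sets (PiM UNIV (\<lambda>_. borel))"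
    by (rule sets_PiM_I[OF J]) (use A in auto)
  have "(\<lambda>\<omega> i. X (\<pi> i) \<omega>) -` prod_emb UNIV (\<lambda>_. borel) J (PiE J A) \<inter> space M = {\<omega>\<in>space M. \<forall>i\<in>J. X (\<pi> i) \<omega> \<in> A i}"
    by (auto simp: prod_emb_iff restrict_PiE_iff)
  then show ?thesis using emeasure_distr[OF fmeas S] by simp
qed

lemma toQ:
  assumes Q: "\<And>k. QQ k" and inj: "inj \<pi>" and J: "finite J" and A: "\<forall>i\<in>J. A i \<in> sets borel"
  shows "measure M {\<omega>\<in>space M. \<forall>i\<in>J. X (\<pi> i) \<omega> \<in> A i} = measure M {\<omega>\<in>space M. \<forall>i\<in>J. X i \<omega> \<in> A i}"
proof -
  obtain n where n: "J \<subseteq> {..<n}" using J by (meson finite_nat_iff_bounded)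
  define A' where "A' i = (if i \<in> J then A i else UNIV)" for i
  have A': "\<forall>i<n. A' i \<in> sets borel"
  proof (intro allI impI)
    fix i assume "i < n"
    show "A' i \<in> sets borel"
    proof (cases "i \<in> J")
      case True then show ?thesis using A by (simp add: A'_def)
    next
      case False then show ?thesis using sets.top[of borel] by (simp add: A'_def)
    qed
  qed
  have e1: "{\<omega>\<in>space M. \<forall>i\<in>J. X (\<pi> i) \<omega> \<in> A i} = {\<omega>\<in>space M. \<forall>i<n. X (\<pi> i) \<omega> \<in> A' i}"
    using n unfolding A'_def by auto
  have e2: "{\<omega>\<in>space M. \<forall>i\<in>J. X i \<omega> \<in> A i} = {\<omega>\<in>space M. \<forall>i<n. X i \<omega> \<in> A' i}"
    using n unfolding A'_def by auto
  have "inj_on \<pi> {..<n}" using inj by (rule inj_on_subset) simp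
  then show ?thesis unfolding e1 e2 using Q[of n] A' unfolding QQ_def by blast
qed

lemma conv: assumes H: Hyp shows "exchangeable M X"
  unfolding exchangeable_def
proof (intro allI impI)
  fix \<pi> :: "nat \<Rightarrow> nat" assume \<pi>: "\<pi> permutes UNIV \<and> finite {i. \<pi> i \<noteq> i}"
  have inj: "inj \<pi>" using \<pi> permutes_inj by blast
  show "distr M (PiM UNIV (\<lambda>_. borel)) (\<lambda>\<omega> i. X (\<pi> i) \<omega>) = distr M (PiM UNIV (\<lambda>_. borel)) (\<lambda>\<omega> i. X i \<omega>)"
  proof (rule measure_eqI_PiM_infinite)
    show "sets (distr M (PiM UNIV (\<lambda>_. borel)) (\<lambda>\<omega> i. X (\<pi> i) \<omega>)) = sets (PiM UNIV (\<lambda>_. borel))" by simp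
    show "sets (distr M (PiM UNIV (\<lambda>_. borel)) (\<lambda>\<omega> i. X i \<omega>)) = sets (PiM UNIV (\<lambda>_. borel))" by simp
    show "finite_measure (distr M (PiM UNIV (\<lambda>_. borel)) (\<lambda>\<omega> i. X (\<pi> i) \<omega>))"
      using prob_space.finite_measure[OF prob_space_distr[OF fmeas]] .
    fix A :: "nat \<Rightarrow> 'b set" and J assume J: "finite J" and A: "\<And>i. i \<in> J \<Longrightarrow> A i \<in> sets borel"
    have A2: "\<forall>i\<in>J. A i \<in> sets borel" using A by blast
    have c2: "emeasure (distr M (PiM UNIV (\<lambda>_. borel)) (\<lambda>\<omega> i. X i \<omega>)) (prod_emb UNIV (\<lambda>_. borel) J (PiE J A))
     = emeasure M {\<omega>\<in>space M. \<forall>i\<in>J. X i \<omega> \<in> A i}"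
      using cyl[OF J A2, of "\<lambda>i. i"] by simp
    have "measure M {\<omega>\<in>space M. \<forall>i\<in>J. X (\<pi> i) \<omega> \<in> A i} = measure M {\<omega>\<in>space M. \<forall>i\<in>J. X i \<omega> \<in> A i}"
      by (rule toQ[OF allQ[OF H] inj J A2])
    then have "emeasure M {\<omega>\<in>space M. \<forall>i\<in>J. X (\<pi> i) \<omega> \<in> A i} = emeasure M {\<omega>\<in>space M. \<forall>i\<in>J. X i \<omega> \<in> A i}"
      by (simp add: emeasure_eq_measure)
    then show "emeasure (distr M (PiM UNIV (\<lambda>_. borel)) (\<lambda>\<omega> i. X (\<pi> i) \<omega>)) (prod_emb UNIV (\<lambda>_. borel) J (PiE J A))
      = emeasure (distr M (PiM UNIV (\<lambda>_. borel)) (\<lambda>\<omega> i. X i \<omega>)) (prod_emb UNIV (\<lambda>_. borel) J (PiE J A))"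
      using cyl[OF J A2, of \<pi>] c2 by simp
  qed
qed

lemma exch_meas:
  assumes E: "exchangeable M X" and \<pi>: "\<pi> permutes UNIV" "finite {i. \<pi> i \<noteq> i}"
    and J: "finite J" and A: "\<forall>i\<in>J. A i \<in> sets borel"
  shows "measure M {\<omega>\<in>space M. \<forall>i\<in>J. X (\<pi> i) \<omega> \<in> A i} = measure M {\<omega>\<in>space M. \<forall>i\<in>J. X i \<omega> \<in> A i}"
proof -
  have d: "distr M (PiM UNIV (\<lambda>_. borel)) (\<lambda>\<omega> i. X (\<pi> i) \<omega>) = distr M (PiM UNIV (\<lambda>_. borel)) (\<lambda>\<omega> i. X i \<omega>)"
    using E \<pi> unfolding exchangeable_def by blast
  have "emeasure M {\<omega>\<in>space M. \<forall>i\<in>J. X (\<pi> i) \<omega> \<in> A i} = emeasure M {\<omega>\<in>space M. \<forall>i\<in>J. X i \<omega> \<in> A i}"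
    using cyl[OF J A, of \<pi>] cyl[OF J A, of "\<lambda>i. i"] d by simp
  then show ?thesis by (simp add: emeasure_eq_measure)
qed


lemma fwd: assumes E: "exchangeable M X" shows Hyp
  unfolding Hyp_def Let_def
proof (intro allI impI ballI)
  fix n :: nat and \<pi> :: "nat \<Rightarrow> nat" and A :: "nat \<Rightarrow> 'b set" and B :: "'b set"
  assume n1: "1 \<le> n" and \<pi>: "\<pi> permutes {..<n}" and A: "\<forall>i<n. A i \<in> sets borel"
    and B: "B \<in> sets borel"
  have \<pi>U: "\<pi> permutes UNIV" using \<pi> by (rule permutes_subset) simp
  have sub: "{i. \<pi> i \<noteq> i} \<subseteq> {..<n}" using \<pi> by (auto simp: permutes_def)
  have fin: "finite {i. \<pi> i \<noteq> i}" using sub by (rule finite_subset) simp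
  have \<pi>n: "\<pi> n = n" using sub by auto
  have \<pi>lt: "\<pi> i < n" if "i < n" for i using permutes_in_image[OF \<pi>] that by simp
  define A2 where "A2 i = (if i < n then A i else B)" for i
  have A2: "\<forall>i\<in>{..n}. A2 i \<in> sets borel" using A B by (auto simp: A2_def)
  have A1: "\<forall>i\<in>{..<n}. A i \<in> sets borel" using A by auto
  have d: "measure M {\<omega>\<in>space M. \<forall>i\<in>{..<n}. X (\<pi> i) \<omega> \<in> A i} = measure M {\<omega>\<in>space M. \<forall>i\<in>{..<n}. X i \<omega> \<in> A i}"
    by (rule exch_meas[OF E \<pi>U fin _ A1]) simp
  have nm: "measure M {\<omega>\<in>space M. \<forall>i\<in>{..n}. X (\<pi> i) \<omega> \<in> A2 i} = measure M {\<omega>\<in>space M. \<forall>i\<in>{..n}. X i \<omega> \<in> A2 i}"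
    by (rule exch_meas[OF E \<pi>U fin _ A2]) simp
  have s1: "{\<omega>\<in>space M. \<forall>i\<in>{..n}. X (\<pi> i) \<omega> \<in> A2 i} = {\<omega> \<in> space M. X n \<omega> \<in> B} \<inter> {\<omega> \<in> space M. \<forall>i<n. X (\<pi> i) \<omega> \<in> A i}"
    using \<pi>n by (auto simp: A2_def le_less) (metis atMost_iff order_refl less_irrefl)
  have s2: "{\<omega>\<in>space M. \<forall>i\<in>{..n}. X i \<omega> \<in> A2 i} = {\<omega> \<in> space M. X n \<omega> \<in> B} \<inter> {\<omega> \<in> space M. \<forall>i<n. X i \<omega> \<in> A i}"
    by (auto simp: A2_def le_less)
  show "measure M ({\<omega> \<in> space M. X n \<omega> \<in> B} \<inter> {\<omega> \<in> space M. \<forall>i<n. X i \<omega> \<in> A i}) / measure M {\<omega> \<in> space M. \<forall>i<n. X i \<omega> \<in> A i}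
      = measure M ({\<omega> \<in> space M. X n \<omega> \<in> B} \<inter> {\<omega> \<in> space M. \<forall>i<n. X (\<pi> i) \<omega> \<in> A i}) / measure M {\<omega> \<in> space M. \<forall>i<n. X (\<pi> i) \<omega> \<in> A i}"
  proof -
    have eqs: "\<And>P. {\<omega>\<in>space M. \<forall>i\<in>{..<n}. P i \<omega>} = {\<omega>\<in>space M. \<forall>i<n. P i \<omega>}" by auto
    show ?thesis using d nm unfolding s1 s2 eqs by simp
  qed
qed

end

theorem mainTheorem5:
  fixes M :: "'a measure" and X :: "nat \<Rightarrow> 'a \<Rightarrow> 'b::polish_space"
  assumes "prob_space M"
    and "\<And>i. X i \<in> borel_measurable M"
    and "cid M X"
  shows "exchangeable M X \<longleftrightarrow>
    (\<forall>n \<ge> 1. \<forall>\<pi>. \<pi> permutes {..<n} \<longrightarrow>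
      (\<forall>A::nat \<Rightarrow> 'b set. (\<forall>i<n. A i \<in> sets borel) \<longrightarrow>
        (let E1 = {\<omega> \<in> space M. \<forall>i<n. X i \<omega> \<in> A i};
             E2 = {\<omega> \<in> space M. \<forall>i<n. X (\<pi> i) \<omega> \<in> A i}
         in measure M E1 > 0 \<longrightarrow> measure M E2 > 0 \<longrightarrow>
            (\<forall>B \<in> sets borel.
               measure M ({\<omega> \<in> space M. X n \<omega> \<in> B} \<inter> E1) / measure M E1
             = measure M ({\<omega> \<in> space M. X n \<omega> \<in> B} \<inter> E2) / measure M E2))))"
proof -
  interpret cidseq M X by (rule cidseq.intro[OF assms(1)]) (unfold_locales, fact+)
  show ?thesis using fwd conv unfolding Hyp_def by blast
qed

end
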